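(* Let $\mathcal{U}$ be any perturbation set, $c:\mathcal{X}\to\mathcal{Y}$ a concept, $D$ a distribution on $\mathcal{X}$, $\beta\in(0,1]$, $\epsilon'\ge0$, and $h_1,\dots,h_T:\mathcal{X}\to\mathcal{Y}$ classifiers. Write $R_t=\mathrm{Rob}_{\mathcal{U}^{-1}(\mathcal{U})}(h_t)$ and $\bar R_{1:t}=\bigcap_{s\le t}(\mathcal{X}\setminus R_s)$ (with $\bar R_{1:0}=\mathcal{X}$). Suppose that for every $1\le t\le T$ with $\Pr_{x\sim D}[\bar R_{1:t-1}]>0$, $$\Pr_{x\sim D}[x\in R_t\mid x\in\bar R_{1:t-1}]\ge\beta\quad\text{and}\quad\Pr_{x\sim D}[h_t(x)\neq c(x)\mid x\in\bar R_{1:t-1}]\le\epsilon'.$$ Then $\Pr_{x\sim D}[\bar R_{1:t}]\le(1-\beta)^t$ for all $t\le T$, and $$\Pr_{x\sim D}\big[\exists z\in\mathcal{U}(x):\ \mathrm{CAS}(h_1,\dots,h_T)(z)\neq c(x)\big]\le\frac{\epsilon'}{\beta}+(1-\beta)^T.$$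
   Context: A perturbation set is a map $\mathcal{U}:\mathcal{X}\to 2^{\mathcal{X}}$. For $z\in\mathcal{X}$ let $\mathcal{U}^{-1}(z)=\{x\in\mathcal{X}: z\in\mathcal{U}(x)\}$, and let $\mathcal{U}^{-1}(\mathcal{U})$ denote the perturbation set $\mathcal{U}^{-1}(\mathcal{U})(x)=\bigcup_{z\in\mathcal{U}(x)}\mathcal{U}^{-1}(z)$. For a classifier $h$ and perturbation set $\mathcal{V}$, $\mathrm{Rob}_{\mathcal{V}}(h)=\{x\in\mathcal{X}:\forall z\in\mathcal{V}(x),\ h(z)=h(x)\}$. Selective classifier: for $h:\mathcal{X}\to\mathcal{Y}$, $G_h(z)=y$ if $\mathcal{U}^{-1}(z)\neq\emptyset$ and $h(\tilde x)=y$ for all $\tilde x\in\mathcal{U}^{-1}(z)$, and $G_h(z)=\perp$ otherwise. Cascade: $\mathrm{CAS}(h_1,\dots,h_T)(z)=G_{h_s}(z)$ where $s=\min\{t\le T: G_{h_t}(z)\neq\perp\}$; if no such $t$ exists, it outputs a fixed arbitrary label. All events are assumed measurable. *)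

theory Defs
  imports "HOL-Probability.Probability"
begin

definition Uinv :: "('a \<Rightarrow> 'a set) \<Rightarrow> 'a \<Rightarrow> 'a set" where
  "Uinv U z = {x. z \<in> U x}"

definition UinvU :: "('a \<Rightarrow> 'a set) \<Rightarrow> 'a \<Rightarrow> 'a set" where
  "UinvU U x = (\<Union>z\<in>U x. Uinv U z)"

definition Rob :: "('a \<Rightarrow> 'a set) \<Rightarrow> ('a \<Rightarrow> 'b) \<Rightarrow> 'a set" where
  "Rob V h = {x. \<forall>z\<in>V x. h z = h x}"

text \<open>Selective classifier G_h; None encodes the abstention symbol \<bottom>.\<close>
definition G :: "('a \<Rightarrow> 'a set) \<Rightarrow> ('a \<Rightarrow> 'b) \<Rightarrow> 'a \<Rightarrow> 'b option" where
  "G U h z = (if Uinv U z \<noteq> {} \<and> (\<exists>y. \<forall>x\<in>Uinv U z. h x = y)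
              then Some (THE y. \<forall>x\<in>Uinv U z. h x = y) else None)"

text \<open>Cascade CAS(h_1,...,h_T), with y0 the fixed arbitrary fallback label.\<close>
definition CAS :: "('a \<Rightarrow> 'a set) \<Rightarrow> (nat \<Rightarrow> 'a \<Rightarrow> 'b) \<Rightarrow> nat \<Rightarrow> 'b \<Rightarrow> 'a \<Rightarrow> 'b" where
  "CAS U hs T y0 z =
     (if \<exists>t. 1 \<le> t \<and> t \<le> T \<and> G U (hs t) z \<noteq> None
      then the (G U (hs (LEAST t. 1 \<le> t \<and> t \<le> T \<and> G U (hs t) z \<noteq> None)) z)
      else y0)"

definition Rset :: "('a \<Rightarrow> 'a set) \<Rightarrow> (nat \<Rightarrow> 'a \<Rightarrow> 'b) \<Rightarrow> nat \<Rightarrow> 'a set" where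
  "Rset U hs t = Rob (UinvU U) (hs t)"

definition Rbar :: "('a \<Rightarrow> 'a set) \<Rightarrow> (nat \<Rightarrow> 'a \<Rightarrow> 'b) \<Rightarrow> nat \<Rightarrow> 'a set" where
  "Rbar U hs t = (\<Inter>s\<in>{1..t}. UNIV - Rset U hs s)"

definition cprob :: "'a measure \<Rightarrow> 'a set \<Rightarrow> 'a set \<Rightarrow> real" where
  "cprob D A B = measure D (A \<inter> B) / measure D B"

end

theory Submission
  imports Defs
begin

lemma G_some: "x \<in> Uinv U z \<Longrightarrow> G U h z = Some v \<Longrightarrow> v = h x"
  unfolding G_def
  by (auto split: if_splits intro!: the_equality[symmetric])

lemma G_rob: "z \<in> U x \<Longrightarrow> x \<in> Rob (UinvU U) h \<Longrightarrow> G U h z \<noteq> None"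
proof -
  assume a: "z \<in> U x" "x \<in> Rob (UinvU U) h"
  have "x \<in> Uinv U z" using a by (simp add: Uinv_def)
  moreover have "\<forall>x'\<in>Uinv U z. h x' = h x"
    using a by (auto simp: Rob_def UinvU_def)
  ultimately have c: "Uinv U z \<noteq> {} \<and> (\<exists>y. \<forall>x\<in>Uinv U z. h x = y)" by blast
  show ?thesis unfolding G_def if_P[OF c] by simp
qed

lemma Rbar_0: "Rbar U hs 0 = UNIV" by (simp add: Rbar_def)
lemma Rbar_Suc: "Rbar U hs (Suc n) = Rbar U hs n \<inter> (UNIV - Rset U hs (Suc n))"
  by (auto simp: Rbar_def le_Suc_eq)

lemma err_sub:
  assumes z: "z \<in> U x" and e: "CAS U hs T y0 z \<noteq> c x" and nx: "x \<notin> Rbar U hs T"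
  shows "\<exists>s\<in>{1..T}. x \<in> Rbar U hs (s - 1) \<and> hs s x \<noteq> c x"
proof -
  let ?P = "\<lambda>t. 1 \<le> t \<and> t \<le> T \<and> x \<in> Rset U hs t"
  have "x \<notin> (\<Inter>s\<in>{1..T}. UNIV - Rset U hs s)" using nx unfolding Rbar_def .
  then obtain s0 where "s0 \<in> {1..T}" "x \<in> Rset U hs s0" by blast
  hence ex: "\<exists>t. ?P t" by auto
  define t0 where "t0 = (LEAST t. ?P t)"
  have Pt0: "?P t0" unfolding t0_def by (rule LeastI_ex[OF ex])
  have nb: "\<And>r. r < t0 \<Longrightarrow> \<not> ?P r" unfolding t0_def by (rule not_less_Least)
  let ?Q = "\<lambda>t. 1 \<le> t \<and> t \<le> T \<and> G U (hs t) z \<noteq> None"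
  have "x \<in> Rob (UinvU U) (hs t0)" using Pt0 by (simp add: Rset_def)
  hence Qt0: "?Q t0" using Pt0 G_rob[of z U x "hs t0", OF z] by blast
  define s where "s = (LEAST t. ?Q t)"
  have Qs: "?Q s" unfolding s_def by (rule LeastI[of ?Q t0, OF Qt0])
  have st: "s \<le> t0" unfolding s_def by (rule Least_le[of ?Q t0, OF Qt0])
  obtain v where v: "G U (hs s) z = Some v" using Qs by auto
  have xin: "x \<in> Uinv U z" using z by (simp add: Uinv_def)
  have ex2: "\<exists>t. ?Q t" using Qt0 by blast
  have "CAS U hs T y0 z = the (G U (hs s) z)" unfolding CAS_def if_P[OF ex2] s_def ..
  hence "CAS U hs T y0 z = v" using v by simp
  hence "hs s x \<noteq> c x" using G_some[OF xin v] e by simp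
  moreover have "x \<in> Rbar U hs (s - 1)"
  proof -
    { fix r assume "r \<in> {1..s-1}"
      hence "r < t0" "1 \<le> r" "r \<le> T" using st Qs by auto
      hence "x \<notin> Rset U hs r" using nb by blast }
    thus ?thesis unfolding Rbar_def by blast
  qed
  ultimately show ?thesis using Qs by auto
qed

theorem mainTheorem4:
  fixes U :: "'a \<Rightarrow> 'a set" and c :: "'a \<Rightarrow> 'b" and D :: "'a measure"
    and \<beta> \<epsilon>' :: real and hs :: "nat \<Rightarrow> 'a \<Rightarrow> 'b" and T :: nat and y0 :: 'b
  assumes "prob_space D" and "space D = UNIV"
    and "0 < \<beta>" and "\<beta> \<le> 1" and "0 \<le> \<epsilon>'"
    and "\<And>t. 1 \<le> t \<Longrightarrow> t \<le> T \<Longrightarrow> Rset U hs t \<in> sets D"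
    and "\<And>t. 1 \<le> t \<Longrightarrow> t \<le> T \<Longrightarrow> {x. hs t x \<noteq> c x} \<in> sets D"
    and "{x. \<exists>z\<in>U x. CAS U hs T y0 z \<noteq> c x} \<in> sets D"
    and "\<And>t. 1 \<le> t \<Longrightarrow> t \<le> T \<Longrightarrow> measure D (Rbar U hs (t - 1)) > 0 \<Longrightarrow>
           cprob D (Rset U hs t) (Rbar U hs (t - 1)) \<ge> \<beta> \<and>
           cprob D {x. hs t x \<noteq> c x} (Rbar U hs (t - 1)) \<le> \<epsilon>'"
  shows "(\<forall>t\<le>T. measure D (Rbar U hs t) \<le> (1 - \<beta>) ^ t) \<and>
         measure D {x. \<exists>z\<in>U x. CAS U hs T y0 z \<noteq> c x} \<le> \<epsilon>' / \<beta> + (1 - \<beta>) ^ T"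
proof -
  interpret P: prob_space D by fact
  have meas: "n \<le> T \<Longrightarrow> Rbar U hs n \<in> sets D" for n
  proof (induction n)
    case 0 show ?case by (metis Rbar_0 assms(2) sets.top)
  next
    case (Suc n)
    have "Rset U hs (Suc n) \<in> sets D" using Suc.prems assms(6) by simp
    hence "UNIV - Rset U hs (Suc n) \<in> sets D" using sets.compl_sets assms(2) by metis
    moreover have "Rbar U hs n \<in> sets D" using Suc by simp
    ultimately show ?case unfolding Rbar_Suc by (rule sets.Int[rotated])
  qed
  have bnd: "n \<le> T \<Longrightarrow> measure D (Rbar U hs n) \<le> (1 - \<beta>) ^ n" for n
  proof (induction n)
    case 0 show ?case by (simp add: Rbar_0 flip: assms(2))
  next
    case (Suc n)
    let ?B = "Rbar U hs n" and ?R = "Rset U hs (Suc n)"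
    have mB: "?B \<in> sets D" using meas Suc.prems by simp
    have mR: "?R \<in> sets D" using Suc.prems assms(6) by simp
    have IH: "measure D ?B \<le> (1 - \<beta>) ^ n" using Suc by simp
    have eq: "Rbar U hs (Suc n) = ?B - (?R \<inter> ?B)" by (auto simp: Rbar_Suc)
    have m: "measure D (Rbar U hs (Suc n)) = measure D ?B - measure D (?R \<inter> ?B)"
      unfolding eq by (rule P.finite_measure_Diff) (use mB mR in auto)
    have q: "0 \<le> 1 - \<beta>" using assms(4) by simp
    show ?case
    proof (cases "measure D ?B > 0")
      case True
      hence "cprob D ?R ?B \<ge> \<beta>" using assms(9)[of "Suc n"] Suc.prems by simp
      hence "measure D (?R \<inter> ?B) \<ge> \<beta> * measure D ?B"
        using True by (simp add: cprob_def le_divide_eq)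
      hence "measure D (Rbar U hs (Suc n)) \<le> (1 - \<beta>) * measure D ?B"
        using m by (simp add: algebra_simps)
      also have "\<dots> \<le> (1 - \<beta>) * (1 - \<beta>) ^ n" using IH q by (rule mult_left_mono)
      finally show ?thesis by simp
    next
      case False
      hence "measure D ?B = 0" using measure_nonneg[of D ?B] by linarith
      moreover have "measure D (Rbar U hs (Suc n)) \<le> measure D ?B"
        using mB by (intro P.finite_measure_mono) (auto simp: Rbar_Suc)
      moreover have "0 \<le> (1 - \<beta>) ^ Suc n" using q by (rule zero_le_power)
      ultimately show ?thesis by linarith
    qed
  qed
  define A where "A s = Rbar U hs (s - 1) \<inter> {x. hs s x \<noteq> c x}" for s
  have mA: "A s \<in> sets D" if "s \<in> {1..T}" for s
    using that meas[of "s-1"] assms(7)[of s] by (auto simp: A_def)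
  have Ab: "measure D (A s) \<le> \<epsilon>' * (1 - \<beta>) ^ (s - 1)" if "s \<in> {1..T}" for s
  proof -
    let ?B = "Rbar U hs (s - 1)" and ?H = "{x. hs s x \<noteq> c x}"
    have b: "measure D ?B \<le> (1 - \<beta>) ^ (s - 1)" by (rule bnd) (use that in auto)
    have mB: "?B \<in> sets D" by (rule meas) (use that in auto)
    have "measure D (A s) \<le> \<epsilon>' * measure D ?B"
    proof (cases "measure D ?B > 0")
      case True
      hence "cprob D ?H ?B \<le> \<epsilon>'" using assms(9)[of s] that by simp
      hence "measure D (?H \<inter> ?B) \<le> \<epsilon>' * measure D ?B"
        using True by (simp add: cprob_def divide_le_eq)
      thus ?thesis by (simp add: A_def Int_commute)
    next
      case False
      hence "measure D ?B = 0" using measure_nonneg[of D ?B] by linarith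
      moreover have "measure D (A s) \<le> measure D ?B"
        using mB by (intro P.finite_measure_mono) (auto simp: A_def)
      ultimately show ?thesis by simp
    qed
    also have "\<dots> \<le> \<epsilon>' * (1 - \<beta>) ^ (s - 1)" using b assms(5) by (rule mult_left_mono)
    finally show ?thesis .
  qed
  have geo: "\<epsilon>' * (\<Sum>k<T. (1 - \<beta>) ^ k) \<le> \<epsilon>' / \<beta>"
  proof -
    have g: "(\<Sum>k<T. (1 - \<beta>) ^ k) \<le> 1 / \<beta>"
    proof -
      have "(\<Sum>k<T. (1 - \<beta>) ^ k) = (1 - (1 - \<beta>) ^ T) / \<beta>"
        using sum_gp_strict[of "1 - \<beta>" T] assms(3) by simp
      also have "\<dots> \<le> 1 / \<beta>" using assms(3,4)
        by (intro divide_right_mono) auto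
      finally show ?thesis .
    qed
    show ?thesis using mult_left_mono[OF g assms(5)] by simp
  qed
  let ?E = "{x. \<exists>z\<in>U x. CAS U hs T y0 z \<noteq> c x}"
  have sub: "?E \<subseteq> Rbar U hs T \<union> (\<Union>s\<in>{1..T}. A s)"
  proof
    fix x assume "x \<in> ?E"
    then obtain z where z: "z \<in> U x" "CAS U hs T y0 z \<noteq> c x" by blast
    show "x \<in> Rbar U hs T \<union> (\<Union>s\<in>{1..T}. A s)"
    proof (cases "x \<in> Rbar U hs T")
      case False
      then obtain s where "s \<in> {1..T}" "x \<in> A s"
        using err_sub[of z U x hs T y0 c, OF z False] unfolding A_def by blast
      thus ?thesis by blast
    qed simp
  qed
  have "measure D ?E \<le> measure D (Rbar U hs T \<union> (\<Union>s\<in>{1..T}. A s))"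
    using sub meas[of T] mA by (intro P.finite_measure_mono) auto
  also have "\<dots> \<le> measure D (Rbar U hs T) + measure D (\<Union>s\<in>{1..T}. A s)"
    using meas[of T] mA by (intro measure_Un_le) auto
  also have "\<dots> \<le> measure D (Rbar U hs T) + \<epsilon>' / \<beta>"
  proof -
    have "measure D (\<Union>s\<in>{1..T}. A s) \<le> (\<Sum>s\<in>{1..T}. measure D (A s))"
      using mA by (intro P.finite_measure_subadditive_finite) auto
    also have "\<dots> \<le> (\<Sum>s\<in>{1..T}. \<epsilon>' * (1 - \<beta>) ^ (s - 1))"
      using Ab by (rule sum_mono)
    also have "\<dots> = \<epsilon>' * (\<Sum>k<T. (1 - \<beta>) ^ k)"
    proof -
      have "(\<Sum>s\<in>{1..T}. (1 - \<beta>) ^ (s - 1)) = (\<Sum>k<T. (1 - \<beta>) ^ k)"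
        by (rule sum.reindex_bij_witness[of _ Suc "\<lambda>s. s - 1"]) auto
      thus ?thesis by (simp only: sum_distrib_left[symmetric])
    qed
    also have "\<dots> \<le> \<epsilon>' / \<beta>" by (rule geo)
    finally show ?thesis by linarith
  qed
  finally have "measure D ?E \<le> measure D (Rbar U hs T) + \<epsilon>' / \<beta>" .
  moreover have "measure D (Rbar U hs T) \<le> (1 - \<beta>) ^ T" by (rule bnd) simp
  ultimately have f1: "measure D ?E \<le> \<epsilon>' / \<beta> + (1 - \<beta>) ^ T" by linarith
  have f2: "\<forall>t\<le>T. measure D (Rbar U hs t) \<le> (1 - \<beta>) ^ t" using bnd by simp
  show ?thesis by (rule conjI[OF f2 f1])
qed

end
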